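(* Let $I$ be a set of integers and let $(a_{ij})_{i,j\in I}$ be a family of integers. Then there exist integers $(x_i)_{i\in I}$ such that $$x_j-x_i\equiv a_{ij}\pmod{(i,j)}\quad\text{for all } i,j\in I$$ if and only if $$a_{ij}+a_{jk}\equiv a_{ik}\pmod{(i,j,k)}\quad\text{for all } i,j,k\in I.$$
   Context: For integers $i_0,\dots,i_m$, the notation $(i_0,\dots,i_m)$ denotes the ideal of $\mathbb{Z}$ generated by $i_0,\dots,i_m$, i.e. $\gcd(i_0,\dots,i_m)\mathbb{Z}$. A congruence modulo an ideal $J$ means that the difference lies in $J$; in particular, a congruence modulo the zero ideal is an equality. *)

theory Defs
  imports "HOL-Number_Theory.Number_Theory"
begin

end

theory Submission
  imports Defs "HOL-Library.Nat_Bijection"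
begin

lemma gcd_Lcm_dvd:
  fixes c z :: int and m :: "'b \<Rightarrow> int"
  assumes "finite S" "\<forall>k\<in>S. gcd c (m k) dvd z"
  shows "gcd c (Lcm (m ` S)) dvd z"
  using assms
proof (induction S rule: finite_induct)
  case empty then show ?case by simp
next
  case (insert k0 S)
  then show ?case by (simp add: gcd_lcm_distrib)
qed

lemma crt_gen:
  fixes m r :: "'b \<Rightarrow> int"
  assumes "finite S" "\<forall>k\<in>S. \<forall>l\<in>S. gcd (m k) (m l) dvd r k - r l"
  shows "\<exists>v. \<forall>k\<in>S. m k dvd v - r k"
  using assms
proof (induction S rule: finite_induct)
  case empty then show ?case by simp
next
  case (insert k0 S)
  then obtain v where v: "\<forall>k\<in>S. m k dvd v - r k" by auto
  define L where "L = Lcm (m ` S)"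
  have mL: "\<forall>k\<in>S. m k dvd L" unfolding L_def by auto
  have "gcd (m k0) L dvd r k0 - v"
    unfolding L_def
  proof (rule gcd_Lcm_dvd[OF insert(1)], intro ballI)
    fix k assume k: "k \<in> S"
    have "gcd (m k0) (m k) dvd r k0 - r k" using insert(4) k by auto
    moreover have "gcd (m k0) (m k) dvd r k - v"
      using v k by (metis dvd_diff_commute dvd_trans gcd_dvd2)
    ultimately have "gcd (m k0) (m k) dvd (r k0 - r k) + (r k - v)" by (rule dvd_add)
    then show "gcd (m k0) (m k) dvd r k0 - v" by simp
  qed
  then obtain q where q: "r k0 - v = gcd (m k0) L * q" by (auto elim: dvdE)
  obtain s u where su: "s * m k0 + u * L = gcd (m k0) L" using bezout_int by blast
  define w where "w = v + L * u * q"
  have "w - r k0 = L * u * q - gcd (m k0) L * q" using q unfolding w_def by linarith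
  also have "\<dots> = - (m k0 * s * q)" using su by (simp add: algebra_simps flip: su)
  finally have w0: "m k0 dvd w - r k0" by simp
  have "\<forall>k\<in>S. m k dvd w - r k"
  proof
    fix k assume k: "k \<in> S"
    have "m k dvd (v - r k) + L * u * q" using v mL k by (simp add: dvd_add)
    then show "m k dvd w - r k" unfolding w_def by (simp add: algebra_simps)
  qed
  with w0 show ?case by auto
qed

theorem theorem1:
  fixes I :: "int set" and a :: "int \<Rightarrow> int \<Rightarrow> int"
  shows "(\<exists>x :: int \<Rightarrow> int. \<forall>i\<in>I. \<forall>j\<in>I. [x j - x i = a i j] (mod (gcd i j)))
     \<longleftrightarrow> (\<forall>i\<in>I. \<forall>j\<in>I. \<forall>k\<in>I. [a i j + a j k = a i k] (mod (gcd (gcd i j) k)))"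
proof
  assume "\<exists>x :: int \<Rightarrow> int. \<forall>i\<in>I. \<forall>j\<in>I. [x j - x i = a i j] (mod (gcd i j))"
  then obtain x where x: "\<forall>i\<in>I. \<forall>j\<in>I. gcd i j dvd (x j - x i) - a i j"
    by (auto simp: cong_iff_dvd_diff)
  show "\<forall>i\<in>I. \<forall>j\<in>I. \<forall>k\<in>I. [a i j + a j k = a i k] (mod (gcd (gcd i j) k))"
  proof (intro ballI)
    fix i j k assume ijk: "i \<in> I" "j \<in> I" "k \<in> I"
    let ?g = "gcd (gcd i j) k"
    have gi: "?g dvd i" and gj: "?g dvd j" and gk: "?g dvd k"
      by (meson dvd_trans gcd_dvd1 gcd_dvd2)+
    have F1: "?g dvd (x j - x i) - a i j" using x ijk gi gj by (meson dvd_trans gcd_greatest)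
    have F2: "?g dvd (x k - x j) - a j k" using x ijk gk gj by (meson dvd_trans gcd_greatest)
    have F3: "?g dvd (x k - x i) - a i k" using x ijk gi gk by (meson dvd_trans gcd_greatest)
    have "?g dvd ((x k - x i) - a i k) - ((x j - x i) - a i j) - ((x k - x j) - a j k)"
      by (rule dvd_diff[OF dvd_diff[OF F3 F1] F2])
    then have "?g dvd a i j + a j k - a i k" by (simp add: algebra_simps)
    then show "[a i j + a j k = a i k] (mod ?g)" by (simp add: cong_iff_dvd_diff)
  qed
next
  assume H0: "\<forall>i\<in>I. \<forall>j\<in>I. \<forall>k\<in>I. [a i j + a j k = a i k] (mod (gcd (gcd i j) k))"
  then have H: "\<forall>i\<in>I. \<forall>j\<in>I. \<forall>k\<in>I. gcd (gcd i j) k dvd a i j + a j k - a i k"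
    by (simp add: cong_iff_dvd_diff)
  show "\<exists>x :: int \<Rightarrow> int. \<forall>i\<in>I. \<forall>j\<in>I. [x j - x i = a i j] (mod (gcd i j))"
  proof -
    have aii: "gcd i j dvd a i i" if "i \<in> I" "j \<in> I" for i j
    proof -
      have "gcd (gcd i i) i dvd a i i + a i i - a i i" using H that by blast
      then have "i dvd a i i" by simp
      then show ?thesis by (meson dvd_trans gcd_dvd1)
    qed
    have asym: "gcd i j dvd a i j + a j i" if "i \<in> I" "j \<in> I" for i j
    proof -
      have "gcd (gcd i j) i dvd a i j + a j i - a i i" using H that by blast
      moreover have "gcd (gcd i j) i = gcd i j"
        by (metis gcd.commute gcd.left_idem)
      ultimately have "gcd i j dvd a i j + a j i - a i i" by simp
      moreover have "gcd i j dvd a i i" using aii that by blast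
      ultimately have "gcd i j dvd (a i j + a j i - a i i) + a i i" by (rule dvd_add)
      then show ?thesis by simp
    qed
    define e where "e = int_encode"
    define d where "d = int_decode"
    have de[simp]: "d (e i) = i" for i unfolding d_def e_def by simp
    have ed[simp]: "e (d n) = n" for n unfolding d_def e_def by simp
    define Q where "Q = (\<lambda>n (f :: int \<Rightarrow> int) v. \<forall>j\<in>I. e j < n \<longrightarrow> gcd j (d n) dvd v - (f j + a j (d n)))"
    define X where "X = rec_nat (\<lambda>_. 0 :: int) (\<lambda>n f. f(d n := (SOME v. Q n f v)))"
    have X0: "X 0 = (\<lambda>_. 0)" unfolding X_def by simp
    have XS: "X (Suc n) = (X n)(d n := (SOME v. Q n (X n) v))" for n unfolding X_def by simp
    define P where "P = (\<lambda>n. \<forall>i\<in>I. \<forall>j\<in>I. e i < n \<longrightarrow> e j < n \<longrightarrow> gcd i j dvd X n j - X n i - a i j)"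
    have Pn: "P n" for n
    proof (induction n)
      case 0 then show ?case unfolding P_def by simp
    next
      case (Suc n)
      define i0 where "i0 = d n"
      define v where "v = (SOME v. Q n (X n) v)"
      have XSn: "X (Suc n) = (X n)(i0 := v)" unfolding i0_def v_def XS ..
      show ?case
      proof (cases "i0 \<in> I")
        case False
        show ?thesis unfolding P_def
        proof (intro ballI impI)
          fix i j assume ij: "i \<in> I" "j \<in> I" "e i < Suc n" "e j < Suc n"
          have "i \<noteq> i0" "j \<noteq> i0" using ij False by auto
          moreover then have "e i < n" "e j < n" using ij unfolding i0_def
            by (metis de less_antisym)+
          ultimately show "gcd i j dvd X (Suc n) j - X (Suc n) i - a i j"
            using Suc ij unfolding P_def XSn by simp
        qed
      next
        case True
        define S where "S = {j\<in>I. e j < n}"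
        have finS: "finite S"
        proof (rule finite_subset)
          show "S \<subseteq> d ` {..<n}" unfolding S_def by (auto intro!: image_eqI[where x = "e _"])
        qed simp
        have "\<exists>v. \<forall>k\<in>S. gcd k i0 dvd v - (X n k + a k i0)"
        proof (rule crt_gen[OF finS], intro ballI)
          fix j k assume jk: "j \<in> S" "k \<in> S"
          let ?g = "gcd (gcd j i0) (gcd k i0)"
          have g1: "?g dvd gcd (gcd j k) i0"
            by (meson dvd_trans gcd_dvd1 gcd_dvd2 gcd_greatest)
          have g2: "?g dvd gcd j k"
            by (meson dvd_trans gcd_dvd1 gcd_dvd2 gcd_greatest)
          have "gcd (gcd j k) i0 dvd a j k + a k i0 - a j i0" using H jk True unfolding S_def by blast
          with g1 have A: "?g dvd a j k + a k i0 - a j i0" by (rule dvd_trans)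
          have "gcd j k dvd X n k - X n j - a j k" using Suc jk unfolding P_def S_def by blast
          with g2 have B: "?g dvd X n k - X n j - a j k" by (rule dvd_trans)
          have "?g dvd - ((X n k - X n j - a j k) + (a j k + a k i0 - a j i0))"
            using dvd_minus_iff dvd_add[OF B A] by blast
          then show "?g dvd X n j + a j i0 - (X n k + a k i0)" by (simp add: algebra_simps)
        qed
        then have "\<exists>v. Q n (X n) v" unfolding Q_def S_def i0_def by auto
        then have "Q n (X n) v" unfolding v_def by (rule someI_ex)
        then have vQ: "\<forall>j\<in>I. e j < n \<longrightarrow> gcd j i0 dvd v - (X n j + a j i0)"
          unfolding Q_def i0_def by simp
        show ?thesis unfolding P_def
        proof (intro ballI impI)
          fix i j assume ij: "i \<in> I" "j \<in> I" "e i < Suc n" "e j < Suc n"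
          have ei: "i \<noteq> i0 \<Longrightarrow> e i < n" using ij unfolding i0_def
            by (metis de less_antisym)
          have ej: "j \<noteq> i0 \<Longrightarrow> e j < n" using ij unfolding i0_def
            by (metis de less_antisym)
          show "gcd i j dvd X (Suc n) j - X (Suc n) i - a i j"
          proof (cases "i = i0"; cases "j = i0")
            assume "i = i0" "j = i0"
            then show ?thesis using aii[OF ij(1) ij(1)] unfolding XSn by simp
          next
            assume h: "i = i0" "j \<noteq> i0"
            have "gcd j i dvd v - (X n j + a j i)" using vQ ej h ij by blast
            then have 1: "gcd i j dvd v - (X n j + a j i)" by (simp add: gcd.commute)
            have 2: "gcd i j dvd a i j + a j i" using asym ij by blast
            have "gcd i j dvd - ((v - (X n j + a j i)) + (a i j + a j i))"
              using dvd_minus_iff dvd_add[OF 1 2] by blast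
            then show ?thesis using h unfolding XSn by (simp add: algebra_simps)
          next
            assume h: "i \<noteq> i0" "j = i0"
            then show ?thesis using vQ ei ij unfolding XSn by (simp add: algebra_simps)
          next
            assume h: "i \<noteq> i0" "j \<noteq> i0"
            then show ?thesis using Suc ei ej ij unfolding XSn P_def by simp
          qed
        qed
      qed
    qed
    have stab: "X (Suc (e j) + k) j = X (Suc (e j)) j" for j k
    proof (induction k)
      case 0 then show ?case by simp
    next
      case (Suc k)
      have "d (Suc (e j) + k) \<noteq> j"
      proof
        assume "d (Suc (e j) + k) = j"
        then have "e (d (Suc (e j) + k)) = e j" by simp
        then show False by simp
      qed
      then show ?case using Suc by (simp add: XS)
    qed
    define x where "x = (\<lambda>j. X (Suc (e j)) j)"
    have xX: "x j = X m j" if ejm: "e j < m" for j m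
    proof -
      obtain k where k: "m = Suc (e j + k)" using less_imp_Suc_add[OF ejm] by blast
      have "X (Suc (e j) + k) j = X (Suc (e j)) j" by (rule stab)
      then show ?thesis unfolding x_def k by simp
    qed
    have "\<forall>i\<in>I. \<forall>j\<in>I. [x j - x i = a i j] (mod (gcd i j))"
    proof (intro ballI)
      fix i j assume ij: "i \<in> I" "j \<in> I"
      define N where "N = Suc (max (e i) (e j))"
      have N: "e i < N" "e j < N" unfolding N_def by auto
      have "gcd i j dvd X N j - X N i - a i j"
        using Pn[of N] ij N unfolding P_def by blast
      then have "gcd i j dvd x j - x i - a i j" using xX[OF N(1)] xX[OF N(2)] by simp
      then show "[x j - x i = a i j] (mod (gcd i j))" by (simp add: cong_iff_dvd_diff)
    qed
    then show ?thesis by blast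
  qed
qed

end
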